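(* With $h$ as defined in the context, for every $x\in\mathbb C$ such that neither $x$ nor $x+\frac12$ belongs to $\{-1,-2,-3,\dots\}$, \[h(x)=\frac{x+1}{x+\frac 32}\,h\left(x+\frac 12\right)h(2x).\]
   Context: Let $u_n=(-1)^{s_2(n)}$, where $s_2(n)$ is the sum of the binary digits of the non-negative integer $n$ (Thue–Morse sequence with values $\pm1$). For $b,c\in\mathbb C\setminus\{-1,-2,-3,\dots\}$ let $f(b,c)=\prod_{n=1}^\infty\left(\frac{n+b}{n+c}\right)^{u_n}$ (convergent), and define $h(x)=f\left(\frac x2,\frac{x+1}{2}\right)=\prod_{n=1}^\infty\left(\frac{2n+x}{2n+1+x}\right)^{u_n}$ for $x\in\mathbb C\setminus\{-2,-3,-4,\dots\}$. *)

theory Defs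
  imports "HOL-Analysis.Analysis"
begin

fun s2 :: "nat \<Rightarrow> nat" where
  "s2 n = (if n = 0 then 0 else n mod 2 + s2 (n div 2))"

definition u :: "nat \<Rightarrow> int" where
  "u n = (-1) ^ s2 n"

definition f :: "complex \<Rightarrow> complex \<Rightarrow> complex" where
  "f b c = (\<Prod>n. ((of_nat (Suc n) + b) / (of_nat (Suc n) + c)) powi u (Suc n))"

definition h :: "complex \<Rightarrow> complex" where
  "h x = f (x / 2) ((x + 1) / 2)"

end

theory Submission
  imports Defs
begin

declare s2.simps[simp del]

lemma s2_double: "s2 (2*m) = s2 m"
  by (cases "m=0") (simp, subst s2.simps, simp)

lemma s2_double1: "s2 (2*m+1) = Suc (s2 m)"
  by (subst s2.simps) simp

lemma u_double: "u (2*m) = u m" unfolding u_def by (simp add: s2_double)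
lemma u_double1: "u (2*m+1) = - u m" unfolding u_def using s2_double1[of m] by simp
lemma u_cases: "u n = 1 \<or> u n = -1" unfolding u_def by (simp add: minus_one_power_iff)

definition A :: "complex \<Rightarrow> complex \<Rightarrow> nat \<Rightarrow> complex" where
  "A b c n = ((of_nat n + b) / (of_nat n + c)) powi u n"

fun P :: "complex \<Rightarrow> complex \<Rightarrow> nat \<Rightarrow> complex" where
  "P b c 0 = 1" | "P b c (Suc n) = P b c n * A b c (Suc n)"

lemma f_eq: "f b c = prodinf (\<lambda>n. A b c (Suc n))" unfolding f_def A_def by simp

lemma prod_P: "(\<Prod>i\<le>N. A b c (Suc i)) = P b c (Suc N)"
  by (induction N) (simp_all add: prod.atMost_Suc)

lemma f_lim: assumes "P b c \<longlonglongrightarrow> L" "L \<noteq> 0" shows "f b c = L"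
proof -
  have "(\<lambda>N. P b c (Suc N)) \<longlonglongrightarrow> L" using assms(1) by (rule LIMSEQ_Suc)
  hence "(\<lambda>N. \<Prod>i\<le>N. A b c (Suc i)) \<longlonglongrightarrow> L" by (simp add: prod_P)
  hence "(\<lambda>n. A b c (Suc n)) has_prod L" unfolding has_prod_def raw_has_prod_def using assms(2) by simp
  thus ?thesis using has_prod_unique f_eq by metis
qed

lemma LIMSEQ_even_odd':
  fixes X :: "nat \<Rightarrow> 'a::real_normed_vector"
  assumes "(\<lambda>n. X (2*n)) \<longlonglongrightarrow> L" "(\<lambda>n. X (2*n+1)) \<longlonglongrightarrow> L"
  shows "X \<longlonglongrightarrow> L"
proof (rule LIMSEQ_I)
  fix r :: real assume r: "r > 0"
  obtain N1 where N1: "\<forall>n\<ge>N1. norm (X (2*n) - L) < r" using LIMSEQ_D[OF assms(1) r] by blast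
  obtain N2 where N2: "\<forall>n\<ge>N2. norm (X (2*n+1) - L) < r" using LIMSEQ_D[OF assms(2) r] by blast
  show "\<exists>no. \<forall>n\<ge>no. norm (X n - L) < r"
  proof (intro exI allI impI)
    fix n assume n: "n \<ge> 2*N1 + 2*N2"
    show "norm (X n - L) < r"
    proof (cases "even n")
      case True
      then obtain k where k: "n = 2*k" by blast
      with n have "k \<ge> N1" by simp
      with N1 k show ?thesis by simp
    next
      case False
      then obtain k where k: "n = 2*k+1" using oddE by blast
      with n have "k \<ge> N2" by simp
      with N2 k show ?thesis by simp
    qed
  qed
qed

lemma A_tendsto: "A b c \<longlonglongrightarrow> 1"
proof -
  have z: "(\<lambda>n. (of_nat n + b) / (of_nat n + c)) \<longlonglongrightarrow> 1"
  proof -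
    have "(\<lambda>n. (1 + b / of_nat n) / (1 + c / of_nat n)) \<longlonglongrightarrow> (1 + 0) / (1 + 0)"
      by (intro tendsto_intros tendsto_divide_0[OF tendsto_const] tendsto_of_nat) simp_all
    moreover have "eventually (\<lambda>n. (1 + b / of_nat n) / (1 + c / of_nat n) = (of_nat n + b) / (of_nat n + c)) sequentially"
      using eventually_gt_at_top[of "0::nat"]
    proof eventually_elim
      case (elim n)
      hence n0: "(of_nat n :: complex) \<noteq> 0" by simp
      have e1: "1 + b / of_nat n = (of_nat n + b) / of_nat n" "1 + c / of_nat n = (of_nat n + c) / of_nat n"
        using n0 by (simp_all add: field_simps)
      show ?case unfolding e1 using n0 by simp
    qed
    ultimately show ?thesis by (simp add: tendsto_cong)
  qed
  have zi: "(\<lambda>n. inverse ((of_nat n + b) / (of_nat n + c))) \<longlonglongrightarrow> 1"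
    using tendsto_inverse[OF z] by simp
  show ?thesis
  proof (rule tendstoI)
    fix e :: real assume e: "e > 0"
    from tendstoD[OF z e] tendstoD[OF zi e]
    show "eventually (\<lambda>n. dist (A b c n) 1 < e) sequentially"
    proof eventually_elim
      case (elim n)
      thus ?case using u_cases[of n] unfolding A_def by (auto simp: power_int_minus)
    qed
  qed
qed

lemma A_nz: "of_nat n + b \<noteq> 0 \<Longrightarrow> of_nat n + c \<noteq> 0 \<Longrightarrow> A b c n \<noteq> 0"
  unfolding A_def using u_cases[of n] by (auto simp: power_int_minus)

lemma norm_lb:
  fixes b :: complex
  assumes "norm b \<le> real m + 1" "k \<ge> 2*m+2"
  shows "norm (of_nat k + b) \<ge> real m + 1"
proof -
  have "norm (of_nat k :: complex) - norm b \<le> norm (of_nat k + b)" by (rule norm_diff_ineq)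
  moreover have "norm (of_nat k :: complex) = real k" by simp
  moreover have "real k \<ge> 2 * real m + 2" using assms(2) by linarith
  ultimately show ?thesis using assms(1) by linarith
qed

lemma frac_bound:
  fixes w D1 D2 :: complex
  assumes "norm D1 \<ge> t" "norm D2 \<ge> t" "t > 0"
  shows "norm (w / (D1 * D2)) \<le> norm w * inverse (t^2)"
proof -
  have "t^2 \<le> norm D1 * norm D2" unfolding power2_eq_square
    using assms by (intro mult_mono) auto
  hence "norm w / (norm D1 * norm D2) \<le> norm w / t^2"
    using assms by (intro divide_left_mono mult_pos_pos) auto
  moreover have "norm (w / (D1 * D2)) = norm w / (norm D1 * norm D2)" by (simp add: norm_divide norm_mult)
  ultimately show ?thesis by (simp add: divide_inverse)
qed

lemma pair_eq:
  fixes b c :: complex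
  assumes "of_nat p + b \<noteq> 0" "of_nat p + c \<noteq> 0" "of_nat (p+1) + b \<noteq> 0" "of_nat (p+1) + c \<noteq> 0"
    and "u (p+1) = - u p"
  shows "A b c p * A b c (p+1) - 1 = (if u p = 1 then (b-c)/((of_nat p+c)*(of_nat (p+1)+b))
           else (c-b)/((of_nat p+b)*(of_nat (p+1)+c)))"
proof -
  have X: "of_nat (p+1) = (of_nat p :: complex) + 1" by simp
  have alg1: "(X+b)/(X+c) * inverse((X+1+b)/(X+1+c)) - 1 = (b-c)/((X+c)*(X+1+b))"
    if "X+b \<noteq> 0" "X+c \<noteq> 0" "X+1+b \<noteq> 0" "X+1+c \<noteq> 0" for X :: complex
  proof -
    have "(X+b)/(X+c) * inverse((X+1+b)/(X+1+c)) = ((X+b)*(X+1+c))/((X+c)*(X+1+b))"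
      using that by (simp add: field_simps)
    also have "\<dots> - 1 = ((X+b)*(X+1+c) - (X+c)*(X+1+b))/((X+c)*(X+1+b))"
      using that by (simp add: diff_divide_distrib)
    also have "(X+b)*(X+1+c) - (X+c)*(X+1+b) = b - c" by (simp add: algebra_simps)
    finally show ?thesis .
  qed
  have alg2: "inverse ((X+b)/(X+c)) * ((X+1+b)/(X+1+c)) - 1 = (c-b)/((X+b)*(X+1+c))"
    if "X+b \<noteq> 0" "X+c \<noteq> 0" "X+1+b \<noteq> 0" "X+1+c \<noteq> 0" for X :: complex
  proof -
    have "inverse ((X+b)/(X+c)) * ((X+1+b)/(X+1+c)) = ((X+c)*(X+1+b))/((X+b)*(X+1+c))"
      using that by (simp add: field_simps)
    also have "\<dots> - 1 = ((X+c)*(X+1+b) - (X+b)*(X+1+c))/((X+b)*(X+1+c))"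
      using that by (simp add: diff_divide_distrib)
    also have "(X+c)*(X+1+b) - (X+b)*(X+1+c) = c - b" by (simp add: algebra_simps)
    finally show ?thesis .
  qed
  show ?thesis
  proof (cases "u p = 1")
    case True
    thus ?thesis using assms alg1[of "of_nat p"] unfolding A_def X by (simp add: power_int_minus)
  next
    case False
    hence "u p = -1" using u_cases[of p] by simp
    thus ?thesis using assms alg2[of "of_nat p"] unfolding A_def X by (simp add: power_int_minus)
  qed
qed

lemma conv:
  fixes b c :: complex
  assumes nzb: "\<And>n. n \<ge> 1 \<Longrightarrow> of_nat n + b \<noteq> 0" and nzc: "\<And>n. n \<ge> 1 \<Longrightarrow> of_nat n + c \<noteq> 0"
  shows "\<exists>L. L \<noteq> 0 \<and> P b c \<longlonglongrightarrow> L"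
proof -
  define q where "q m = A b c (2*m+2) * A b c (2*m+3)" for m
  define g where "g m = norm (b - c) * inverse (real (Suc m) ^ 2)" for m
  obtain M0 :: nat where M0: "max (norm b) (norm c) < real M0" using reals_Archimedean2 by blast
  have sg: "summable g"
  proof -
    have "summable (\<lambda>n. inverse (of_nat n ^ 2 :: real))" by (rule inverse_power_summable) simp
    hence "summable (\<lambda>n. inverse (of_nat (Suc n) ^ 2 :: real))" by (subst summable_Suc_iff)
    thus ?thesis unfolding g_def by (intro summable_mult)
  qed
  have bnd: "norm (norm (q m - 1)) \<le> g m" if m: "m \<ge> M0" for m
  proof -
    have nb: "norm b \<le> real m + 1" "norm c \<le> real m + 1" using M0 m by auto
    have l1: "norm (of_nat (2*m+2) + b) \<ge> real m + 1" "norm (of_nat (2*m+2) + c) \<ge> real m + 1"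
      "norm (of_nat (2*m+2+1) + b) \<ge> real m + 1" "norm (of_nat (2*m+2+1) + c) \<ge> real m + 1"
      by (rule norm_lb; use nb in simp)+
    have uh: "u (2*m+2+1) = - u (2*m+2)"
      using u_double1[of "m+1"] u_double[of "m+1"] by (simp add: algebra_simps)
    hence eq: "q m - 1 = (if u (2*m+2) = 1 then (b-c)/((of_nat (2*m+2)+c)*(of_nat (2*m+2+1)+b))
           else (c-b)/((of_nat (2*m+2)+b)*(of_nat (2*m+2+1)+c)))"
    proof -
      have e3: "2*m+3 = 2*m+2+1" by simp
      show ?thesis unfolding q_def e3
        by (rule pair_eq[OF nzb nzc nzb nzc uh]) simp_all
    qed
    have t: "real (Suc m) = real m + 1" by simp
    show ?thesis
    proof (cases "u (2*m+2) = 1")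
      case True
      thus ?thesis using eq frac_bound[OF l1(2) l1(3), of "b-c"] unfolding g_def t by simp
    next
      case False
      thus ?thesis using eq frac_bound[OF l1(1) l1(4), of "c-b"] unfolding g_def t by (simp add: norm_minus_commute)
    qed
  qed
  have "summable (\<lambda>m. norm (q m - 1))" by (rule summable_comparison_test'[OF sg bnd])
  hence cq: "convergent_prod q"
    by (intro abs_convergent_prod_imp_convergent_prod summable_imp_abs_convergent_prod)
  have qnz: "q m \<noteq> 0" for m unfolding q_def
    using A_nz[OF nzb nzc, of "2*m+2"] A_nz[OF nzb nzc, of "2*m+3"] by simp
  have Lq: "(\<lambda>M. \<Prod>m\<le>M. q m) \<longlonglongrightarrow> prodinf q" by (rule convergent_prod_LIMSEQ[OF cq])
  have Lqnz: "prodinf q \<noteq> 0" by (rule prodinf_nonzero[OF cq qnz])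
  have Podd: "P b c (2*M+3) = A b c 1 * (\<Prod>m\<le>M. q m)" for M
  proof (induction M)
    case 0
    show ?case by (simp add: q_def numeral_3_eq_3)
  next
    case (Suc M)
    have "2 * Suc M + 3 = Suc (Suc (2*M+3))" by simp
    hence "P b c (2 * Suc M + 3) = P b c (2*M+3) * q (Suc M)"
      by (simp add: q_def numeral_3_eq_3 algebra_simps)
    thus ?case using Suc by (simp add: prod.atMost_Suc)
  qed
  define L where "L = A b c 1 * prodinf q"
  have Lnz: "L \<noteq> 0" unfolding L_def using A_nz[OF nzb nzc, of 1] Lqnz by simp
  have "(\<lambda>M. P b c (2*M+3)) \<longlonglongrightarrow> L" unfolding Podd L_def by (intro tendsto_intros Lq)
  moreover have "(\<lambda>M. P b c (2*Suc M+1)) = (\<lambda>M. P b c (2*M+3))"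
  proof -
    have "2*Suc M+1 = 2*M+3" for M by simp
    thus ?thesis by (simp only:)
  qed
  ultimately have odd: "(\<lambda>M. P b c (2*M+1)) \<longlonglongrightarrow> L"
    by (subst filterlim_sequentially_Suc[symmetric]) simp
  have "(A b c \<circ> (\<lambda>M. 2*M+2)) \<longlonglongrightarrow> 1"
    by (rule LIMSEQ_subseq_LIMSEQ[OF A_tendsto]) (simp add: strict_mono_def)
  hence "(\<lambda>M. P b c (2*M+1) * A b c (2*M+2)) \<longlonglongrightarrow> L * 1"
    using odd by (intro tendsto_intros) (simp_all add: o_def)
  moreover have "(\<lambda>M. P b c (2*Suc M)) = (\<lambda>M. P b c (2*M+1) * A b c (2*M+2))"
  proof -
    have "2*Suc M = Suc (2*M+1)" for M by simp
    hence "P b c (2*Suc M) = P b c (2*M+1) * A b c (2*M+2)" for M by (simp only: P.simps) simp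
    thus ?thesis by (simp only:)
  qed
  ultimately have "(\<lambda>M. P b c (2*Suc M)) \<longlonglongrightarrow> L" by simp
  hence even: "(\<lambda>M. P b c (2*M)) \<longlonglongrightarrow> L"
    by (subst filterlim_sequentially_Suc[symmetric])
  show ?thesis using LIMSEQ_even_odd'[OF even odd] Lnz by blast
qed

lemma nzh1:
  fixes y :: complex assumes "y \<noteq> - of_nat (2*n)" shows "of_nat n + y/2 \<noteq> 0"
proof
  assume "of_nat n + y/2 = 0"
  hence "y/2 = - of_nat n" by (simp add: eq_neg_iff_add_eq_0 add.commute)
  hence "y = - 2 * of_nat n" by (simp add: field_simps)
  thus False using assms by simp
qed

lemma nzh2:
  fixes y :: complex assumes "y \<noteq> - of_nat (2*n+1)" shows "of_nat n + (y+1)/2 \<noteq> 0"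
proof
  assume "of_nat n + (y+1)/2 = 0"
  hence "(y+1)/2 = - of_nat n" by (simp add: eq_neg_iff_add_eq_0 add.commute)
  hence "y = - 2 * of_nat n - 1" by (simp add: field_simps)
  moreover have e: "(- of_nat (2*n+1)::complex) = - 2 * of_nat n - 1" by simp
  ultimately show False using assms unfolding e by blast
qed

lemma u0: "u 0 = 1" unfolding u_def by (simp add: s2.simps)
lemma u1: "u 1 = -1" using u_double1[of 0] u0 by simp

lemma term_alg:
  fixes X x :: complex
  assumes "X + x/2 \<noteq> 0" "X + (x+1)/2 \<noteq> 0" "X + (x+1/2)/2 \<noteq> 0" "X + (x+1/2+1)/2 \<noteq> 0"
  shows "(X + x/2)/(X+(x+1)/2) = (X + (x+1/2)/2)/(X+(x+1/2+1)/2) * ((2*X + 2*x/2)/(2*X + (2*x+1)/2))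
           * inverse ((2*X+1 + 2*x/2)/(2*X+1+(2*x+1)/2))"
proof -
  have e: "2*X + 2*x/2 = 2*(X + x/2)" "2*X + (2*x+1)/2 = 2*(X + (x+1/2)/2)"
     "2*X+1 + 2*x/2 = 2*(X + (x+1)/2)" "2*X+1+(2*x+1)/2 = 2*(X+(x+1/2+1)/2)"
    by (simp_all add: field_simps)
  have g: "c/d * ((2*a)/(2*c)) * inverse ((2*b)/(2*d)) = a/b" if "b \<noteq> 0" "c \<noteq> 0" "d \<noteq> 0" for a b c d :: complex
    using that by (simp add: field_simps)
  show ?thesis unfolding e using assms by (intro g[symmetric])
qed

lemma term_id:
  fixes x :: complex
  assumes "of_nat m + x/2 \<noteq> 0" "of_nat m + (x+1)/2 \<noteq> 0" "of_nat m + (x+1/2)/2 \<noteq> 0" "of_nat m + (x+1/2+1)/2 \<noteq> 0"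
  shows "A (x/2) ((x+1)/2) m = A ((x+1/2)/2) ((x+1/2+1)/2) m * A (2*x/2) ((2*x+1)/2) (2*m) * A (2*x/2) ((2*x+1)/2) (2*m+1)"
proof -
  have o: "(of_nat (2*m) :: complex) = 2 * of_nat m" "(of_nat (2*m+1) :: complex) = 2 * of_nat m + 1" by simp_all
  note t = term_alg[OF assms]
  show ?thesis
  proof (cases "u m = 1")
    case True
    thus ?thesis unfolding A_def u_double u_double1 o using t by (simp add: power_int_minus)
  next
    case False
    hence "u m = -1" using u_cases[of m] by simp
    thus ?thesis unfolding A_def u_double u_double1 o using arg_cong[OF t, of inverse]
      by (simp add: power_int_minus)
  qed
qed

theorem lemma4:
  fixes x :: complex
  assumes "\<forall>k::nat. k \<ge> 1 \<longrightarrow> x \<noteq> - of_nat k"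
      and "\<forall>k::nat. k \<ge> 1 \<longrightarrow> x + 1/2 \<noteq> - of_nat k"
  shows "h x = (x + 1) / (x + 3/2) * h (x + 1/2) * h (2 * x)"
proof -
  have a1: "x \<noteq> - of_nat k" if "k \<ge> 1" for k using assms(1) that by blast
  have a2: "x + 1/2 \<noteq> - of_nat k" if "k \<ge> 1" for k using assms(2) that by blast
  have n1: "of_nat n + x/2 \<noteq> 0" if "n \<ge> 1" for n
    using a1[of "2*n"] that by (intro nzh1) simp
  have n2: "of_nat n + (x+1)/2 \<noteq> 0" if "n \<ge> 1" for n
    using a1[of "2*n+1"] that by (intro nzh2) simp
  have n3: "of_nat n + (x+1/2)/2 \<noteq> 0" if "n \<ge> 1" for n
    using a2[of "2*n"] that by (intro nzh1) simp
  have n4: "of_nat n + (x+1/2+1)/2 \<noteq> 0" if "n \<ge> 1" for n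
    using a2[of "2*n+1"] that by (intro nzh2) simp
  have n5: "of_nat n + 2*x/2 \<noteq> 0" if "n \<ge> 1" for n
    using a1[of "n"] that by (auto simp: add_eq_0_iff)
  have n6: "of_nat n + (2*x+1)/2 \<noteq> 0" if "n \<ge> 1" for n
  proof
    assume "of_nat n + (2*x+1)/2 = 0"
    hence "(2*x+1)/2 = - of_nat n" by (simp add: eq_neg_iff_add_eq_0 add.commute)
    moreover have "(2*x+1)/2 = x + 1/2" by (simp add: field_simps)
    ultimately show False using a2[of n] that by simp
  qed
  obtain L1 where L1: "L1 \<noteq> 0" "P (x/2) ((x+1)/2) \<longlonglongrightarrow> L1" using conv[OF n1 n2] by blast
  obtain L2 where L2: "L2 \<noteq> 0" "P ((x+1/2)/2) ((x+1/2+1)/2) \<longlonglongrightarrow> L2" using conv[OF n3 n4] by blast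
  obtain L3 where L3: "L3 \<noteq> 0" "P (2*x/2) ((2*x+1)/2) \<longlonglongrightarrow> L3" using conv[OF n5 n6] by blast
  have h1: "h x = L1" unfolding h_def by (rule f_lim[OF L1(2) L1(1)])
  have h2: "h (x+1/2) = L2" unfolding h_def by (rule f_lim[OF L2(2) L2(1)])
  have h3: "h (2*x) = L3" unfolding h_def by (rule f_lim[OF L3(2) L3(1)])
  define k where "k = (x + 1) / (x + 3/2)"
  have x1: "x + 1 \<noteq> 0" using a1[of 1] eq_neg_iff_add_eq_0[of x 1] by simp
  have x2: "x + 3/2 \<noteq> 0" using a2[of 1] by (auto simp: field_simps add_eq_0_iff)
  have ident: "P (x/2) ((x+1)/2) N = k * P ((x+1/2)/2) ((x+1/2+1)/2) N * P (2*x/2) ((2*x+1)/2) (2*N+1)" for N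
  proof (induction N)
    case 0
    have e: "of_nat 1 + 2*x/2 = x + 1" "of_nat 1 + (2*x+1)/2 = x + 3/2" by (simp_all add: field_simps)
    have "k * A (2*x/2) ((2*x+1)/2) 1 = 1" unfolding k_def A_def u1 e using x1 x2
      by (simp add: power_int_minus)
    thus ?case by simp
  next
    case (Suc N)
    have "2 * Suc N + 1 = Suc (Suc (2*N+1))" by simp
    hence "P (2*x/2) ((2*x+1)/2) (2 * Suc N + 1) = P (2*x/2) ((2*x+1)/2) (2*N+1) *
           A (2*x/2) ((2*x+1)/2) (2 * Suc N) * A (2*x/2) ((2*x+1)/2) (2 * Suc N + 1)"
      by (simp only: P.simps) (simp add: algebra_simps)
    moreover have "A (x/2) ((x+1)/2) (Suc N) = A ((x+1/2)/2) ((x+1/2+1)/2) (Suc N) *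
        A (2*x/2) ((2*x+1)/2) (2 * Suc N) * A (2*x/2) ((2*x+1)/2) (2 * Suc N + 1)"
      by (rule term_id[OF n1 n2 n3 n4]) simp_all
    ultimately show ?case using Suc by (simp add: algebra_simps)
  qed
  have "(P (2*x/2) ((2*x+1)/2) \<circ> (\<lambda>N. 2*N+1)) \<longlonglongrightarrow> L3"
    by (rule LIMSEQ_subseq_LIMSEQ[OF L3(2)]) (simp add: strict_mono_def)
  hence "(\<lambda>N. k * P ((x+1/2)/2) ((x+1/2+1)/2) N * P (2*x/2) ((2*x+1)/2) (2*N+1)) \<longlonglongrightarrow> k * L2 * L3"
    using L2(2) by (intro tendsto_intros) (simp_all add: o_def)
  moreover have "P (x/2) ((x+1)/2) = (\<lambda>N. k * P ((x+1/2)/2) ((x+1/2+1)/2) N * P (2*x/2) ((2*x+1)/2) (2*N+1))"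
    using ident by (intro ext)
  ultimately have "P (x/2) ((x+1)/2) \<longlonglongrightarrow> k * L2 * L3" by (simp only:)
  hence "L1 = k * L2 * L3" using L1(2) LIMSEQ_unique by blast
  thus ?thesis using h1 h2 h3 k_def by simp
qed

end
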